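(* Let $G=(V,E)$ be an atomic bispanning graph and $v\in V$ a vertex of degree $3$ with adjacent vertices $x,y,z$, joined to $v$ by the edges $e_x,e_y,e_z$ respectively. For each $(a,b)\in\{(x,y),(x,z),(y,z)\}$, the graph $G_{a,b}$ with vertex set $V-v$ and edge set $E-e_x-e_y-e_z+e_{a,b}$, where $e_{a,b}$ is a new edge with ends $a$ and $b$, is bispanning.
   Context: Graphs are finite, undirected, may have parallel edges, no loops; $X\pm a$ denotes adding/removing a single element. A spanning tree of $G$ is $T\subseteq E$ with $(V,T)$ connected and acyclic; $G$ is bispanning if $E$ is the union of two disjoint spanning trees. A bispanning graph is atomic if its only bispanning subgraphs are itself and single vertices. Equivalently $G_{a,b}$ is obtained from $G$ by contracting $e_a$ (merging $v$ into $a$) and deleting the former edge $e_c$, $c$ being the third neighbour; the paper calls $G_{x,y},G_{x,z},G_{y,z}$ the reduction graphs of $G$ at $v$. *)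

theory Defs
  imports Main
begin

text \<open>Parallel edges are
  distinct identifiers with the same ends; loops are excluded.\<close>

definition graph :: "'v set \<Rightarrow> 'e set \<Rightarrow> ('e \<Rightarrow> 'v set) \<Rightarrow> bool" where
  "graph V E ends \<longleftrightarrow> finite V \<and> finite E \<and>
     (\<forall>e\<in>E. ends e \<subseteq> V \<and> card (ends e) = 2)"

inductive reach :: "('e \<Rightarrow> 'v set) \<Rightarrow> 'e set \<Rightarrow> 'v \<Rightarrow> 'v \<Rightarrow> bool"
  for ends :: "'e \<Rightarrow> 'v set" and T :: "'e set" where
  reach_refl: "reach ends T u u"
| reach_step: "e \<in> T \<Longrightarrow> ends e = {u, w} \<Longrightarrow> reach ends T w t \<Longrightarrow> reach ends T u t"

definition connected_graph :: "'v set \<Rightarrow> 'e set \<Rightarrow> ('e \<Rightarrow> 'v set) \<Rightarrow> bool" where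
  "connected_graph V T ends \<longleftrightarrow> V \<noteq> {} \<and> (\<forall>u\<in>V. \<forall>w\<in>V. reach ends T u w)"

definition is_cycle :: "'e set \<Rightarrow> ('e \<Rightarrow> 'v set) \<Rightarrow> 'v list \<Rightarrow> 'e list \<Rightarrow> bool" where
  "is_cycle T ends vs es \<longleftrightarrow> length es \<ge> 2 \<and> length vs = length es \<and>
     distinct vs \<and> distinct es \<and> set es \<subseteq> T \<and>
     (\<forall>i<length es. ends (es ! i) = {vs ! i, vs ! ((i + 1) mod length vs)})"

definition acyclic_graph :: "'e set \<Rightarrow> ('e \<Rightarrow> 'v set) \<Rightarrow> bool" where
  "acyclic_graph T ends \<longleftrightarrow> \<not> (\<exists>vs es. is_cycle T ends vs es)"

definition spanning_tree :: "'v set \<Rightarrow> 'e set \<Rightarrow> ('e \<Rightarrow> 'v set) \<Rightarrow> 'e set \<Rightarrow> bool" where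
  "spanning_tree V E ends T \<longleftrightarrow> T \<subseteq> E \<and> connected_graph V T ends \<and> acyclic_graph T ends"

definition bispanning :: "'v set \<Rightarrow> 'e set \<Rightarrow> ('e \<Rightarrow> 'v set) \<Rightarrow> bool" where
  "bispanning V E ends \<longleftrightarrow> graph V E ends \<and>
     (\<exists>T1 T2. T1 \<inter> T2 = {} \<and> T1 \<union> T2 = E \<and>
        spanning_tree V E ends T1 \<and> spanning_tree V E ends T2)"

definition subgraph :: "'v set \<Rightarrow> 'e set \<Rightarrow> 'v set \<Rightarrow> 'e set \<Rightarrow> ('e \<Rightarrow> 'v set) \<Rightarrow> bool" where
  "subgraph V' E' V E ends \<longleftrightarrow> V' \<subseteq> V \<and> E' \<subseteq> E \<and> (\<forall>e\<in>E'. ends e \<subseteq> V')"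

definition atomic :: "'v set \<Rightarrow> 'e set \<Rightarrow> ('e \<Rightarrow> 'v set) \<Rightarrow> bool" where
  "atomic V E ends \<longleftrightarrow> bispanning V E ends \<and>
     (\<forall>V' E'. subgraph V' E' V E ends \<and> bispanning V' E' ends \<longrightarrow>
        (V' = V \<and> E' = E) \<or> (\<exists>u. V' = {u}))"

text \<open>Reduction graph G_{a,b} at v: old edges become Some e, the new edge e_{a,b} is None.\<close>
definition red_edges :: "'e set \<Rightarrow> 'e \<Rightarrow> 'e \<Rightarrow> 'e \<Rightarrow> 'e option set" where
  "red_edges E ex ey ez = Some ` (E - {ex, ey, ez}) \<union> {None}"

definition red_ends :: "('e \<Rightarrow> 'v set) \<Rightarrow> 'v \<Rightarrow> 'v \<Rightarrow> 'e option \<Rightarrow> 'v set" where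
  "red_ends ends a b o' = (case o' of None \<Rightarrow> {a, b} | Some e \<Rightarrow> ends e)"

end

theory Submission
  imports Defs
begin

lemma reach_trans: "reach ends T u w \<Longrightarrow> reach ends T w t \<Longrightarrow> reach ends T u t"
  by (induction rule: reach.induct) (auto intro: reach.intros)

lemma reach_edge: "e \<in> T \<Longrightarrow> ends e = {u, w} \<Longrightarrow> reach ends T u w"
  by (rule reach_step) (auto intro: reach_refl)

lemma reach_sym: "reach ends T u w \<Longrightarrow> reach ends T w u"
proof (induction rule: reach.induct)
  case (reach_refl u) then show ?case by (rule reach.reach_refl)
next
  case (reach_step e u w t)
  have "reach ends T w u" using reach_step(1,2) by (intro reach_edge[of e]) auto
  then show ?case using reach_step(4) reach_trans by metis
qed

lemma reach_sim:
  assumes "reach ends T p q"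
    and "\<And>e a b. e \<in> T \<Longrightarrow> ends e = {a, b} \<Longrightarrow> reach ends2 T2 a b"
  shows "reach ends2 T2 p q"
  using assms(1)
proof (induction rule: reach.induct)
  case (reach_refl u) then show ?case by (rule reach.reach_refl)
next
  case (reach_step e u w t)
  then show ?case using assms(2) reach_trans by metis
qed

lemma reach_mono: "reach ends T p q \<Longrightarrow> T \<subseteq> T' \<Longrightarrow> reach ends T' p q"
  by (erule reach_sim) (auto intro: reach_edge)

lemma reach_closed: "reach ends T p q \<Longrightarrow> \<forall>e\<in>T. ends e \<subseteq> X \<Longrightarrow> p \<in> X \<Longrightarrow> q \<in> X"
  by (induction rule: reach.induct) auto

lemma reach_empty: "reach ends {} p q \<Longrightarrow> p = q"
  by (induction rule: reach.induct) auto

lemma reach_insert: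
  assumes "reach ends (insert e T) p q" "ends e = {u, w}"
  shows "reach ends T p q \<or> (reach ends T p u \<and> reach ends T w q) \<or> (reach ends T p w \<and> reach ends T u q)"
  using assms(1)
proof (induction rule: reach.induct)
  case (reach_refl u) then show ?case by (auto intro: reach.reach_refl)
next
  case (reach_step f p m q)
  show ?case
  proof (cases "f = e")
    case True
    then have "(p = u \<and> m = w) \<or> (p = w \<and> m = u)" using reach_step(2) assms(2) by (auto simp: doubleton_eq_iff)
    then show ?thesis using reach_step(4) by (auto intro: reach.reach_refl)
  next
    case False
    then have "reach ends T p m" using reach_step(1,2) by (intro reach_edge[of f]) auto
    then show ?thesis using reach_step(4) reach_trans by metis
  qed
qed

definition vpath :: "('e \<Rightarrow> 'v set) \<Rightarrow> 'e set \<Rightarrow> 'v list \<Rightarrow> 'e list \<Rightarrow> bool" where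
  "vpath ends T vs es \<longleftrightarrow> length vs = Suc (length es) \<and> set es \<subseteq> T \<and>
     (\<forall>i<length es. ends (es ! i) = {vs ! i, vs ! Suc i})"

lemma reach_path:
  "reach ends T u t \<Longrightarrow> \<exists>vs es. vpath ends T vs es \<and> vs ! 0 = u \<and> last vs = t \<and> distinct vs"
proof (induction rule: reach.induct)
  case (reach_refl u)
  show ?case by (rule exI[of _ "[u]"], rule exI[of _ "[]"]) (auto simp: vpath_def)
next
  case (reach_step e u w t)
  then obtain vs es where P: "vpath ends T vs es" "vs ! 0 = w" "last vs = t" "distinct vs" by blast
  show ?case
  proof (cases "u \<in> set vs")
    case True
    then obtain i where i: "i < length vs" "vs ! i = u" by (auto simp: in_set_conv_nth)
    have "vpath ends T (drop i vs) (drop i es)"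
      using P(1) i unfolding vpath_def by (auto dest: in_set_dropD)
    moreover have "drop i vs ! 0 = u" using i by simp
    moreover have "last (drop i vs) = t" using i P(3) by simp
    moreover have "distinct (drop i vs)" using P(4) by simp
    ultimately show ?thesis by blast
  next
    case False
    have ne: "vs \<noteq> []" using P(1) by (auto simp: vpath_def)
    have "vpath ends T (u # vs) (e # es)"
      using P(1) P(2) reach_step(1,2) unfolding vpath_def
      by (auto simp: nth_Cons split: nat.splits)
    moreover have "last (u # vs) = t" using ne P(3) by simp
    ultimately show ?thesis using False P(4) by (intro exI[of _ "u # vs"] exI[of _ "e # es"]) auto
  qed
qed

lemma reach_cycle:
  assumes "e \<notin> T" "ends e = {u, w}" "u \<noteq> w" "reach ends T w u"
  shows "\<exists>vs es. is_cycle (insert e T) ends vs es"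
proof -
  obtain vs es where P: "vpath ends T vs es" "vs ! 0 = w" "last vs = u" "distinct vs"
    using reach_path[OF assms(4)] by blast
  have len: "length vs = Suc (length es)" using P(1) by (simp add: vpath_def)
  have "vs \<noteq> []" using len by auto
  then have lastv: "vs ! length es = u" using P(3) len by (simp add: last_conv_nth)
  have "length es \<noteq> 0" using lastv P(2) assms(3) by auto
  have des: "distinct es"
  proof (unfold distinct_conv_nth, intro allI impI)
    fix i j assume ij: "i < length es" "j < length es" "i \<noteq> j"
    show "es ! i \<noteq> es ! j"
    proof
      assume "es ! i = es ! j"
      moreover have "ends (es ! i) = {vs ! i, vs ! Suc i}" "ends (es ! j) = {vs ! j, vs ! Suc j}"
        using P(1) ij by (auto simp: vpath_def)
      ultimately have eq: "{vs ! i, vs ! Suc i} = {vs ! j, vs ! Suc j}" by simp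
      have "vs ! i \<in> {vs ! j, vs ! Suc j}" unfolding eq[symmetric] by simp
      moreover have "vs ! j \<in> {vs ! i, vs ! Suc i}" unfolding eq by simp
      moreover have inj: "\<And>a b. a < length vs \<Longrightarrow> b < length vs \<Longrightarrow> vs!a = vs!b \<Longrightarrow> a = b"
        using nth_eq_iff_index_eq[OF P(4)] by blast
      ultimately have "(i = j \<or> i = Suc j) \<and> (j = i \<or> j = Suc i)"
      proof -
        assume m: "vs ! i \<in> {vs ! j, vs ! Suc j}" "vs ! j \<in> {vs ! i, vs ! Suc i}"
          and inj: "\<And>a b. a < length vs \<Longrightarrow> b < length vs \<Longrightarrow> vs!a = vs!b \<Longrightarrow> a = b"
        have l: "i < length vs" "Suc i < length vs" "j < length vs" "Suc j < length vs" using ij len by auto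
        from m(1) have "vs!i = vs!j \<or> vs!i = vs!Suc j" by simp
        then have "i = j \<or> i = Suc j" using inj[OF l(1) l(3)] inj[OF l(1) l(4)] by blast
        moreover from m(2) have "vs!j = vs!i \<or> vs!j = vs!Suc i" by simp
        then have "j = i \<or> j = Suc i" using inj[OF l(3) l(1)] inj[OF l(3) l(2)] by blast
        ultimately show ?thesis by blast
      qed
      then show False using ij(3) by presburger
    qed
  qed
  have "is_cycle (insert e T) ends vs (es @ [e])"
    unfolding is_cycle_def
  proof (intro conjI allI impI)
    show "2 \<le> length (es @ [e])" using \<open>length es \<noteq> 0\<close> by (cases es) auto
    show "length vs = length (es @ [e])" using len by simp
    show "distinct vs" by fact
    have "set es \<subseteq> T" using P(1) by (simp add: vpath_def)
    then show "distinct (es @ [e])" using des assms(1) by auto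
    show "set (es @ [e]) \<subseteq> insert e T" using P(1) by (auto simp: vpath_def)
    fix i assume i: "i < length (es @ [e])"
    show "ends ((es @ [e]) ! i) = {vs ! i, vs ! ((i + 1) mod length vs)}"
    proof (cases "i < length es")
      case True
      then have "(es @ [e]) ! i = es ! i" by (simp add: nth_append)
      moreover have "(i + 1) mod length vs = Suc i" using True len by simp
      moreover have "ends (es ! i) = {vs ! i, vs ! Suc i}" using P(1) True by (simp add: vpath_def)
      ultimately show ?thesis by simp
    next
      case False
      then have "i = length es" using i by simp
      then have "(es @ [e]) ! i = e" by (simp add: nth_append)
      moreover have "(i + 1) mod length vs = 0" using \<open>i = length es\<close> len by simp
      ultimately show ?thesis using \<open>i = length es\<close> lastv P(2) assms(2) by (simp add: insert_commute)
    qed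
  qed
  then show ?thesis by blast
qed

lemma cycle_reach:
  assumes "is_cycle T ends vs es"
  shows "reach ends (T - {es ! 0}) (vs ! 0) (vs ! 1)" "ends (es ! 0) = {vs ! 0, vs ! 1}" "es ! 0 \<in> T"
proof -
  let ?k = "length es"
  let ?T = "T - {es ! 0}"
  have C: "?k \<ge> 2" "length vs = ?k" "distinct es" "set es \<subseteq> T"
    "\<And>i. i < ?k \<Longrightarrow> ends (es ! i) = {vs ! i, vs ! ((i + 1) mod ?k)}"
    using assms by (auto simp: is_cycle_def)
  have E: "\<And>i. 1 \<le> i \<Longrightarrow> i < ?k \<Longrightarrow> es ! i \<in> ?T"
  proof -
    fix i assume i: "1 \<le> i" "i < ?k"
    have "0 < ?k" using C(1) by linarith
    then have "es ! i \<noteq> es ! 0" using nth_eq_iff_index_eq[OF C(3), of i 0] i by simp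
    then show "es ! i \<in> ?T" using i C(4) nth_mem by blast
  qed
  have R: "1 \<le> j \<Longrightarrow> j < ?k \<Longrightarrow> reach ends ?T (vs ! 1) (vs ! j)" for j
  proof (induction j)
    case 0 then show ?case by simp
  next
    case (Suc j)
    show ?case
    proof (cases "j = 0")
      case True then show ?thesis by (auto intro: reach_refl)
    next
      case False
      have jk: "j < ?k" "1 \<le> j" using Suc.prems False by auto
      have m: "(j + 1) mod ?k = Suc j" using Suc.prems by simp
      have "ends (es ! j) = {vs ! j, vs ! Suc j}" using C(5)[OF jk(1)] m by simp
      then have "reach ends ?T (vs ! j) (vs ! Suc j)"
        using E[OF jk(2) jk(1)] by (intro reach_edge[of "es ! j"])
      moreover have "reach ends ?T (vs ! 1) (vs ! j)" using Suc.IH jk by blast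
      ultimately show ?thesis using reach_trans by metis
    qed
  qed
  have k1: "1 \<le> ?k - 1" "?k - 1 < ?k" using C(1) by auto
  have "reach ends ?T (vs ! (?k - 1)) (vs ! 0)"
  proof -
    have "?k - 1 + 1 = ?k" using C(1) by linarith
    then have m: "(?k - 1 + 1) mod ?k = 0" by simp
    have "ends (es ! (?k - 1)) = {vs ! (?k - 1), vs ! 0}" using C(5)[OF k1(2)] m by simp
    then show ?thesis using E[OF k1] by (intro reach_edge[of "es ! (?k - 1)"])
  qed
  moreover have "reach ends ?T (vs ! 1) (vs ! (?k - 1))" using R[OF k1] .
  ultimately have "reach ends ?T (vs ! 1) (vs ! 0)" using reach_trans by metis
  then show "reach ends ?T (vs ! 0) (vs ! 1)" by (rule reach_sym)
  have k0: "0 < ?k" using C(1) by linarith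
  have m1: "(0 + 1) mod ?k = 1" using C(1) by simp
  show "ends (es ! 0) = {vs ! 0, vs ! 1}" using C(5)[OF k0] m1 by simp
  show "es ! 0 \<in> T" using C(4) nth_mem[OF k0] by blast
qed

definition cls :: "('e \<Rightarrow> 'v set) \<Rightarrow> 'e set \<Rightarrow> 'v set \<Rightarrow> 'v \<Rightarrow> 'v set" where
  "cls ends T X p = {q\<in>X. reach ends T p q}"

definition nc :: "('e \<Rightarrow> 'v set) \<Rightarrow> 'e set \<Rightarrow> 'v set \<Rightarrow> nat" where
  "nc ends T X = card (cls ends T X ` X)"

definition eok :: "'v set \<Rightarrow> 'e set \<Rightarrow> ('e \<Rightarrow> 'v set) \<Rightarrow> bool" where
  "eok X T ends \<longleftrightarrow> finite T \<and> (\<forall>e\<in>T. ends e \<subseteq> X \<and> card (ends e) = 2)"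

lemma cls_eq_iff:
  assumes "u \<in> X" shows "cls ends T X p = cls ends T X u \<longleftrightarrow> reach ends T p u"
proof
  assume "cls ends T X p = cls ends T X u"
  moreover have "u \<in> cls ends T X u" using assms by (simp add: cls_def reach_refl)
  ultimately have "u \<in> cls ends T X p" by simp
  then show "reach ends T p u" by (simp add: cls_def)
next
  assume r: "reach ends T p u"
  show "cls ends T X p = cls ends T X u"
  proof -
    have ru: "reach ends T u p" using r by (rule reach_sym)
    have "reach ends T p q \<longleftrightarrow> reach ends T u q" for q
      using r ru reach_trans[of ends T p u q] reach_trans[of ends T u p q] by blast
    then show ?thesis unfolding cls_def by blast
  qed
qed

lemma reach_equiv: "reach ends T p u \<Longrightarrow> reach ends T p a \<longleftrightarrow> reach ends T u a"
  using reach_sym[of ends T p u] reach_trans[of ends T p u a] reach_trans[of ends T u p a] by blast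

lemma reach_ins_iff:
  assumes "ends e = {u, w}"
  shows "reach ends (insert e T) p q \<longleftrightarrow>
    (reach ends T p q \<or> (reach ends T p u \<and> reach ends T w q) \<or> (reach ends T p w \<and> reach ends T u q))"
proof
  assume "reach ends (insert e T) p q" then show "reach ends T p q \<or> (reach ends T p u \<and> reach ends T w q) \<or> (reach ends T p w \<and> reach ends T u q)"
    using reach_insert[of ends e T p q u w] assms by blast
next
  have ruw: "reach ends (insert e T) u w" using assms by (intro reach_edge[of e]) auto
  then have rwu: "reach ends (insert e T) w u" by (rule reach_sym)
  have m: "\<And>a b. reach ends T a b \<Longrightarrow> reach ends (insert e T) a b"
    using reach_mono[of ends T _ _ "insert e T"] by blast
  assume "reach ends T p q \<or> (reach ends T p u \<and> reach ends T w q) \<or> (reach ends T p w \<and> reach ends T u q)"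
  then show "reach ends (insert e T) p q"
  proof (elim disjE conjE)
    assume "reach ends T p q" then show ?thesis using m by blast
  next
    assume "reach ends T p u" "reach ends T w q"
    then have "reach ends (insert e T) p u" "reach ends (insert e T) w q" using m by blast+
    then show ?thesis using ruw reach_trans[of ends "insert e T" p u w] reach_trans[of ends "insert e T" p w q] by blast
  next
    assume "reach ends T p w" "reach ends T u q"
    then have "reach ends (insert e T) p w" "reach ends (insert e T) u q" using m by blast+
    then show ?thesis using rwu reach_trans[of ends "insert e T" p w u] reach_trans[of ends "insert e T" p u q] by blast
  qed
qed

lemma nc_insert:
  assumes "finite X" "u \<in> X" "w \<in> X" "ends e = {u, w}"
  shows "nc ends T X \<le> nc ends (insert e T) X + 1"
    and "\<not> reach ends T u w \<Longrightarrow> nc ends T X = nc ends (insert e T) X + 1"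
proof -
  let ?c = "cls ends T X" and ?c' = "cls ends (insert e T) X"
  let ?Q = "?c ` X"
  have cp: "?c' p = (if reach ends T p u \<or> reach ends T p w then ?c u \<union> ?c w else ?c p)" if "p \<in> X" for p
  proof (cases "reach ends T p u \<or> reach ends T p w")
    case True
    have eq: "(reach ends T p q \<or> reach ends T p u \<and> reach ends T w q \<or> reach ends T p w \<and> reach ends T u q)
       \<longleftrightarrow> (reach ends T u q \<or> reach ends T w q)" for q
    proof (cases "reach ends T p u")
      case True
      then show ?thesis using reach_equiv[OF True, of q] reach_equiv[OF True, of w] by blast
    next
      case False
      then have h: "reach ends T p w" using \<open>reach ends T p u \<or> reach ends T p w\<close> by blast
      then show ?thesis using reach_equiv[OF h, of q] reach_equiv[OF h, of u] by blast
    qed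
    have "?c' p = ?c u \<union> ?c w"
      unfolding cls_def reach_ins_iff[of ends e u w, OF assms(4)] eq by blast
    then show ?thesis using True by simp
  next
    case False
    have "?c' p = ?c p"
      unfolding cls_def reach_ins_iff[of ends e u w, OF assms(4)] using False by simp
    then show ?thesis using False by simp
  qed
  have img: "?c' ` X = insert (?c u \<union> ?c w) (?Q - {?c u, ?c w})"
  proof (intro set_eqI iffI)
    fix C assume "C \<in> ?c' ` X"
    then obtain p where p: "p \<in> X" "C = ?c' p" by blast
    show "C \<in> insert (?c u \<union> ?c w) (?Q - {?c u, ?c w})"
    proof (cases "reach ends T p u \<or> reach ends T p w")
      case True then show ?thesis using cp[OF p(1)] p by simp
    next
      case False
      then have "?c p \<noteq> ?c u" "?c p \<noteq> ?c w" using cls_eq_iff assms(2,3) by metis+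
      then show ?thesis using cp[OF p(1)] p False by auto
    qed
  next
    fix C assume C: "C \<in> insert (?c u \<union> ?c w) (?Q - {?c u, ?c w})"
    show "C \<in> ?c' ` X"
    proof (cases "C = ?c u \<union> ?c w")
      case True
      then have "C = ?c' u" using cp[OF assms(2)] reach_refl by metis
      then show ?thesis using assms(2) by blast
    next
      case False
      then obtain p where p: "p \<in> X" "C = ?c p" "?c p \<noteq> ?c u" "?c p \<noteq> ?c w" using C by auto
      then have "\<not> reach ends T p u" "\<not> reach ends T p w" using cls_eq_iff assms(2,3) by metis+
      then have "C = ?c' p" using cp[OF p(1)] p(2) by simp
      then show ?thesis using p(1) by blast
    qed
  qed
  have fQ: "finite ?Q" using assms(1) by simp
  have uQ: "?c u \<in> ?Q" "?c w \<in> ?Q" using assms(2,3) by auto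
  have main: "?c u \<noteq> ?c w \<Longrightarrow> card (?c' ` X) + 1 = card ?Q"
  proof -
    assume ne: "?c u \<noteq> ?c w"
    have notin: "?c u \<union> ?c w \<notin> ?Q - {?c u, ?c w}"
    proof
      assume "?c u \<union> ?c w \<in> ?Q - {?c u, ?c w}"
      then obtain r where r: "r \<in> X" "?c u \<union> ?c w = ?c r" "?c r \<noteq> ?c u" by blast
      have "u \<in> ?c u" using assms(2) by (simp add: cls_def reach_refl)
      then have "u \<in> ?c r" using r(2) by blast
      then have "reach ends T r u" by (simp add: cls_def)
      then show False using r(3) cls_eq_iff[OF assms(2), of ends T r] by blast
    qed
    have "card (?c' ` X) = card (?Q - {?c u, ?c w}) + 1"
      using img notin fQ by simp
    moreover have "card (?Q - {?c u, ?c w}) + 2 = card ?Q"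
    proof -
      have s: "{?c u, ?c w} \<subseteq> ?Q" using uQ by blast
      have c2: "card {?c u, ?c w} = 2" using ne by simp
      have "card (?Q - {?c u, ?c w}) = card ?Q - 2" using card_Diff_subset[OF _ s] c2 by simp
      moreover have "2 \<le> card ?Q" using card_mono[OF fQ s] c2 by simp
      ultimately show ?thesis by simp
    qed
    ultimately show ?thesis by simp
  qed
  have same: "?c u = ?c w \<Longrightarrow> ?c' ` X = ?Q"
  proof -
    assume eq: "?c u = ?c w"
    have "?c' ` X = insert (?c u) (?Q - {?c u})" using img unfolding eq by simp
    then show ?thesis using uQ(1) unfolding eq by (simp add: insert_absorb)
  qed
  show "nc ends T X \<le> nc ends (insert e T) X + 1"
    unfolding nc_def using main same by (cases "?c u = ?c w") auto
  assume "\<not> reach ends T u w"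
  then have "?c u \<noteq> ?c w" using cls_eq_iff[OF assms(3), of ends T u] by blast
  then show "nc ends T X = nc ends (insert e T) X + 1" unfolding nc_def using main by simp
qed

lemma nc_empty: "nc ends {} X = card X"
proof -
  have "cls ends {} X p = {p}" if "p \<in> X" for p
    using that reach_empty[of ends p] by (auto simp: cls_def intro: reach_refl)
  then have "cls ends {} X ` X = (\<lambda>p. {p}) ` X" by auto
  moreover have "card ((\<lambda>p. {p}) ` X) = card X" by (rule card_image) (auto simp: inj_on_def)
  ultimately show ?thesis by (simp add: nc_def)
qed

lemma eok_two: "eok X T ends \<Longrightarrow> e \<in> T \<Longrightarrow> \<exists>u w. ends e = {u, w} \<and> u \<noteq> w \<and> u \<in> X \<and> w \<in> X"
  unfolding eok_def card_2_iff by blast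

lemma eok_mono: "eok X T ends \<Longrightarrow> T' \<subseteq> T \<Longrightarrow> eok X T' ends"
  unfolding eok_def by (auto intro: finite_subset)

lemma acyclic_mono: "acyclic_graph T ends \<Longrightarrow> T' \<subseteq> T \<Longrightarrow> acyclic_graph T' ends"
  unfolding acyclic_graph_def is_cycle_def by blast

lemma nc_bound: "eok X T ends \<Longrightarrow> finite X \<Longrightarrow> card X \<le> nc ends T X + card T"
proof -
  assume e: "eok X T ends" and fX: "finite X"
  have "finite T" using e by (simp add: eok_def)
  then show ?thesis using e
  proof (induction T rule: finite_induct)
    case empty then show ?case by (simp add: nc_empty)
  next
    case (insert f F)
    obtain u w where uw: "ends f = {u, w}" "u \<in> X" "w \<in> X" using eok_two[OF insert.prems] by blast
    have "eok X F ends" using insert.prems eok_mono by blast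
    then have "card X \<le> nc ends F X + card F" using insert.IH by blast
    moreover have "nc ends F X \<le> nc ends (insert f F) X + 1" using nc_insert(1)[of X u w ends f F, OF fX uw(2,3) uw(1)] .
    ultimately show ?case using insert.hyps by simp
  qed
qed

lemma nc_acyclic: "eok X T ends \<Longrightarrow> finite X \<Longrightarrow> acyclic_graph T ends \<Longrightarrow> card X = nc ends T X + card T"
proof -
  assume e: "eok X T ends" and fX: "finite X" and ac: "acyclic_graph T ends"
  have "finite T" using e by (simp add: eok_def)
  then show ?thesis using e ac
  proof (induction T rule: finite_induct)
    case empty then show ?case by (simp add: nc_empty)
  next
    case (insert f F)
    obtain u w where uw: "ends f = {u, w}" "u \<noteq> w" "u \<in> X" "w \<in> X" using eok_two[OF insert.prems(1)] by blast
    have "eok X F ends" using insert.prems eok_mono by blast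
    moreover have "acyclic_graph F ends" using insert.prems(2) acyclic_mono by blast
    ultimately have "card X = nc ends F X + card F" using insert.IH by blast
    moreover have "\<not> reach ends F u w"
    proof
      assume "reach ends F u w"
      then have "reach ends F w u" by (rule reach_sym)
      then obtain vs es where "is_cycle (insert f F) ends vs es" using reach_cycle[of f F ends u w, OF insert.hyps(2) uw(1,2)] by blast
      then show False using insert.prems(2) by (auto simp: acyclic_graph_def)
    qed
    then have "nc ends F X = nc ends (insert f F) X + 1" using nc_insert(2)[of X u w ends f F, OF fX uw(3,4) uw(1)] by blast
    ultimately show ?case using insert.hyps by simp
  qed
qed

lemma nc_pos: "finite X \<Longrightarrow> X \<noteq> {} \<Longrightarrow> 1 \<le> nc ends T X"
  unfolding nc_def by (simp add: Suc_le_eq card_gt_0_iff)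

lemma nc_conn: "connected_graph X T ends \<Longrightarrow> nc ends T X = 1"
proof -
  assume c: "connected_graph X T ends"
  have "cls ends T X ` X = {X}" using c unfolding connected_graph_def cls_def by auto
  then show ?thesis by (simp add: nc_def)
qed

lemma L1: "connected_graph X T ends \<Longrightarrow> eok X T ends \<Longrightarrow> finite X \<Longrightarrow> card X \<le> card T + 1"
  using nc_bound nc_conn by fastforce

lemma L3: "acyclic_graph T ends \<Longrightarrow> eok X T ends \<Longrightarrow> finite X \<Longrightarrow> X \<noteq> {} \<Longrightarrow> card T + 1 \<le> card X"
  using nc_acyclic nc_pos by fastforce

lemma ST:
  assumes "finite V" "eok V T ends" "T \<subseteq> E"
  shows "spanning_tree V E ends T \<longleftrightarrow> connected_graph V T ends \<and> card T + 1 = card V"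
proof
  assume s: "spanning_tree V E ends T"
  then have c: "connected_graph V T ends" and a: "acyclic_graph T ends" by (auto simp: spanning_tree_def)
  have "V \<noteq> {}" using c by (simp add: connected_graph_def)
  then show "connected_graph V T ends \<and> card T + 1 = card V"
  proof -
    have "card V \<le> card T + 1" using L1[OF c assms(2,1)] .
    moreover have "card T + 1 \<le> card V" using L3[OF a assms(2,1) \<open>V \<noteq> {}\<close>] .
    ultimately show ?thesis using c by linarith
  qed
next
  assume h: "connected_graph V T ends \<and> card T + 1 = card V"
  have "acyclic_graph T ends"
  proof (unfold acyclic_graph_def, rule notI)
    assume "\<exists>vs es. is_cycle T ends vs es"
    then obtain vs es where cy: "is_cycle T ends vs es" by blast
    note cr = cycle_reach[OF cy]
    let ?T' = "T - {es ! 0}"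
    have "connected_graph V ?T' ends"
      unfolding connected_graph_def
    proof (intro conjI ballI)
      show "V \<noteq> {}" using h by (simp add: connected_graph_def)
      fix p q assume "p \<in> V" "q \<in> V"
      then have "reach ends T p q" using h by (simp add: connected_graph_def)
      then show "reach ends ?T' p q"
      proof (rule reach_sim)
        fix f a b assume f: "f \<in> T" "ends f = {a, b}"
        show "reach ends ?T' a b"
        proof (cases "f = es ! 0")
          case True
          then have "{a, b} = {vs ! 0, vs ! 1}" using f cr(2) by simp
          then have "(a = vs ! 0 \<and> b = vs ! 1) \<or> (a = vs ! 1 \<and> b = vs ! 0)" by (auto simp: doubleton_eq_iff)
          then show ?thesis using cr(1) reach_sym[OF cr(1)] by blast
        next
          case False then show ?thesis using f by (intro reach_edge[of f]) auto
        qed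
      qed
    qed
    moreover have "eok V ?T' ends" using assms(2) eok_mono by blast
    ultimately have "card V \<le> card ?T' + 1" using L1[of V ?T' ends] assms(1) by blast
    moreover have "card ?T' + 1 = card T"
    proof -
      have "finite T" using assms(2) by (simp add: eok_def)
      then have "card T > 0" using cr(3) card_gt_0_iff by blast
      then show ?thesis using cr(3) \<open>finite T\<close> by (simp add: card_Diff_singleton)
    qed
    ultimately show False using h by simp
  qed
  then show "spanning_tree V E ends T" using h assms(3) by (simp add: spanning_tree_def)
qed

definition ie :: "'e set \<Rightarrow> ('e \<Rightarrow> 'v set) \<Rightarrow> 'v set \<Rightarrow> nat" where
  "ie E ends X = card {e\<in>E. ends e \<subseteq> X}"

definition sparse :: "'v set \<Rightarrow> 'e set \<Rightarrow> ('e \<Rightarrow> 'v set) \<Rightarrow> bool" where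
  "sparse V E ends \<longleftrightarrow> (\<forall>X\<subseteq>V. X \<noteq> {} \<longrightarrow> ie E ends X + 2 \<le> 2 * card X)"

lemma graph_eok: "graph V E ends \<Longrightarrow> T \<subseteq> E \<Longrightarrow> eok V T ends"
  unfolding graph_def eok_def by (auto intro: finite_subset)

lemma bisp_tight:
  assumes "bispanning V E ends" shows "card E + 2 = 2 * card V"
proof -
  obtain T1 T2 where T: "T1 \<inter> T2 = {}" "T1 \<union> T2 = E" "spanning_tree V E ends T1" "spanning_tree V E ends T2"
    and g: "graph V E ends" using assms by (auto simp: bispanning_def)
  have fin: "finite V" "finite E" using g by (auto simp: graph_def)
  have s: "T1 \<subseteq> E" "T2 \<subseteq> E" using T by auto
  have "card T1 + 1 = card V" using ST[OF fin(1) graph_eok[OF g s(1)] s(1)] T(3) by blast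
  moreover have "card T2 + 1 = card V" using ST[OF fin(1) graph_eok[OF g s(2)] s(2)] T(4) by blast
  moreover have "card E = card T1 + card T2"
  proof -
    have "finite T1" "finite T2" using s fin(2) finite_subset by blast+
    then show ?thesis using card_Un_disjoint[of T1 T2] T(1,2) by simp
  qed
  ultimately show ?thesis by simp
qed

lemma bisp_sparse:
  assumes "bispanning V E ends" shows "sparse V E ends"
  unfolding sparse_def
proof (intro allI impI)
  fix X assume X: "X \<subseteq> V" "X \<noteq> {}"
  obtain T1 T2 where T: "T1 \<inter> T2 = {}" "T1 \<union> T2 = E" "spanning_tree V E ends T1" "spanning_tree V E ends T2"
    and g: "graph V E ends" using assms by (auto simp: bispanning_def)
  have fin: "finite V" "finite E" using g by (auto simp: graph_def)
  have fX: "finite X" using X fin finite_subset by blast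
  let ?S = "{e\<in>E. ends e \<subseteq> X}"
  have bound: "card (T \<inter> ?S) + 1 \<le> card X" if "spanning_tree V E ends T" for T
  proof -
    have "acyclic_graph T ends" "T \<subseteq> E" using that by (auto simp: spanning_tree_def)
    then have a: "acyclic_graph (T \<inter> ?S) ends" using acyclic_mono by blast
    have "finite (T \<inter> ?S)" using fin(2) by simp
    then have "eok X (T \<inter> ?S) ends" using g unfolding graph_def eok_def by blast
    then show ?thesis using L3[OF a _ fX X(2)] by blast
  qed
  have "?S = (T1 \<inter> ?S) \<union> (T2 \<inter> ?S)" using T(2) by blast
  then have "card ?S \<le> card (T1 \<inter> ?S) + card (T2 \<inter> ?S)" using card_Un_le[of "T1 \<inter> ?S" "T2 \<inter> ?S"] by simp
  then show "ie E ends X + 2 \<le> 2 * card X" using bound[OF T(3)] bound[OF T(4)] by (simp add: ie_def)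
qed

lemma tight_union:
  assumes sp: "sparse V E ends" and fE: "finite E" and fV: "finite V"
    and XY: "X \<subseteq> V" "Y \<subseteq> V" "X \<inter> Y \<noteq> {}"
    and tX: "ie E ends X + 2 = 2 * card X" and tY: "ie E ends Y + 2 = 2 * card Y"
  shows "ie E ends (X \<union> Y) + 2 = 2 * card (X \<union> Y)"
proof -
  let ?S = "\<lambda>Z. {e\<in>E. ends e \<subseteq> Z}"
  have f: "finite (?S X)" "finite (?S Y)" "finite (?S (X \<union> Y))" using fE by auto
  have "card (?S X \<union> ?S Y) + card (?S X \<inter> ?S Y) = card (?S X) + card (?S Y)"
    using card_Un_Int[OF f(1,2)] by simp
  moreover have "card (?S X \<union> ?S Y) \<le> card (?S (X \<union> Y))" by (rule card_mono[OF f(3)]) blast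
  moreover have "card (?S X \<inter> ?S Y) = card (?S (X \<inter> Y))"
  proof -
    have "?S X \<inter> ?S Y = ?S (X \<inter> Y)" by blast
    then show ?thesis by simp
  qed
  moreover have "ie E ends (X \<inter> Y) + 2 \<le> 2 * card (X \<inter> Y)"
  proof -
    have "X \<inter> Y \<subseteq> V" using XY by blast
    then show ?thesis using sp XY(3) unfolding sparse_def by simp
  qed
  moreover have "ie E ends (X \<union> Y) + 2 \<le> 2 * card (X \<union> Y)"
  proof -
    have "X \<union> Y \<subseteq> V" "X \<union> Y \<noteq> {}" using XY by blast+
    then show ?thesis using sp unfolding sparse_def by simp
  qed
  moreover have "card (X \<union> Y) + card (X \<inter> Y) = card X + card Y"
  proof -
    have "finite X" "finite Y" using XY fV finite_subset by blast+
    then show ?thesis using card_Un_Int[of X Y] by simp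
  qed
  ultimately have "card (?S (X \<union> Y)) + 2 = 2 * card (X \<union> Y)" using tX tY unfolding ie_def by linarith
  then show ?thesis unfolding ie_def .
qed

lemma inc_end: "graph V E ends \<Longrightarrow> e \<in> E \<Longrightarrow> v \<in> ends e \<Longrightarrow> \<exists>u. ends e = {v, u} \<and> u \<noteq> v \<and> u \<in> V"
proof -
  assume g: "graph V E ends" and e: "e \<in> E" and v: "v \<in> ends e"
  then have s: "ends e \<subseteq> V" "card (ends e) = 2" by (auto simp: graph_def)
  then obtain x y where xy: "ends e = {x, y}" "x \<noteq> y" by (auto simp: card_2_iff)
  show ?thesis
  proof (cases "v = x")
    case True then show ?thesis using xy s by auto
  next
    case False then have "v = y" using v xy by auto
    then show ?thesis using xy s by (intro exI[of _ x]) auto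
  qed
qed

lemma deg_split:
  assumes "graph V E ends" "v \<in> V"
  shows "card {e\<in>E. v \<in> ends e} + ie E ends (V - {v}) = card E"
proof -
  have fE: "finite E" using assms by (simp add: graph_def)
  have "{e\<in>E. ends e \<subseteq> V - {v}} = {e\<in>E. v \<notin> ends e}" using assms(1) by (auto simp: graph_def)
  moreover have "card {e\<in>E. v \<in> ends e} + card {e\<in>E. v \<notin> ends e} = card E"
  proof -
    have "{e\<in>E. v \<in> ends e} \<union> {e\<in>E. v \<notin> ends e} = E" by blast
    moreover have "{e\<in>E. v \<in> ends e} \<inter> {e\<in>E. v \<notin> ends e} = {}" by blast
    ultimately show ?thesis using card_Un_disjoint[of "{e\<in>E. v \<in> ends e}" "{e\<in>E. v \<notin> ends e}"] fE by simp
  qed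
  ultimately show ?thesis by (simp add: ie_def)
qed

lemma deg_sum:
  assumes "graph V E ends"
  shows "(\<Sum>v\<in>V. card {e\<in>E. v \<in> ends e}) = 2 * card E"
proof -
  have fin: "finite V" "finite E" using assms by (auto simp: graph_def)
  have "(\<Sum>v\<in>V. card {e\<in>E. v \<in> ends e}) = (\<Sum>v\<in>V. \<Sum>e\<in>E. if v \<in> ends e then 1 else 0)"
    using fin by (simp add: sum.inter_filter[symmetric])
  also have "\<dots> = (\<Sum>e\<in>E. \<Sum>v\<in>V. if v \<in> ends e then 1 else 0)" by (rule sum.swap)
  also have "\<dots> = (\<Sum>e\<in>E. 2)"
  proof (rule sum.cong[OF refl])
    fix e assume "e \<in> E"
    then have "ends e \<subseteq> V" "card (ends e) = 2" using assms by (auto simp: graph_def)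
    then have "{v\<in>V. v \<in> ends e} = ends e" by blast
    then show "(\<Sum>v\<in>V. if v \<in> ends e then 1 else 0) = (2::nat)"
      using fin \<open>card (ends e) = 2\<close> by (simp add: sum.inter_filter[symmetric])
  qed
  finally show ?thesis by simp
qed

lemma low_deg:
  assumes "graph V E ends" "card E + 2 = 2 * card V"
  shows "\<exists>v\<in>V. card {e\<in>E. v \<in> ends e} \<le> 3"
proof (rule ccontr)
  assume "\<not> ?thesis"
  then have "\<forall>v\<in>V. 4 \<le> card {e\<in>E. v \<in> ends e}" by auto
  then have "card V * 4 \<le> (\<Sum>v\<in>V. card {e\<in>E. v \<in> ends e})" using sum_bounded_below[of V "4::nat" "\<lambda>v. card {e\<in>E. v \<in> ends e}"] by simp
  then show False using deg_sum[OF assms(1)] assms(2) by linarith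
qed

lemma graph_del:
  assumes "graph V E ends" "{e\<in>E. v \<in> ends e} \<subseteq> D"
  shows "graph (V - {v}) (E - D) ends"
  using assms unfolding graph_def by auto

lemma conn_lift:
  assumes "connected_graph V' T ends1"
    and "\<And>p q. reach ends1 T p q \<Longrightarrow> reach ends2 T2 p q"
    and "u \<in> V'" "reach ends2 T2 v u"
  shows "connected_graph (insert v V') T2 ends2"
  unfolding connected_graph_def
proof (intro conjI ballI)
  show "insert v V' \<noteq> {}" by simp
  have vu: "reach ends2 T2 u v" using assms(4) by (rule reach_sym)
  have in': "p \<in> V' \<Longrightarrow> q \<in> V' \<Longrightarrow> reach ends2 T2 p q" for p q
    using assms(1,2) by (simp add: connected_graph_def)
  fix p q assume "p \<in> insert v V'" "q \<in> insert v V'"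
  then consider "p = v" "q = v" | "p = v" "q \<in> V'" | "p \<in> V'" "q = v" | "p \<in> V'" "q \<in> V'" by blast
  then show "reach ends2 T2 p q"
  proof cases
    case 1 then show ?thesis by (simp add: reach_refl)
  next
    case 2 then show ?thesis using assms(4) in'[OF assms(3)] reach_trans by metis
  next
    case 3 then show ?thesis using vu in'[of p u] assms(3) reach_trans by metis
  qed (rule in')
qed

lemma tree_lift:
  assumes "finite V'" "v \<notin> V'" "spanning_tree V' E' ends' T'" "eok V' T' ends'"
    "eok (insert v V') T ends" "card T = card T' + 1"
    "\<And>p q. reach ends' T' p q \<Longrightarrow> reach ends T p q"
    "u \<in> V'" "reach ends T v u" "T \<subseteq> E"
  shows "spanning_tree (insert v V') E ends T"
proof -
  have "T' \<subseteq> E'" using assms(3) by (simp add: spanning_tree_def)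
  then have h: "connected_graph V' T' ends'" "card T' + 1 = card V'" using ST[OF assms(1,4)] assms(3) by blast+
  have "connected_graph (insert v V') T ends" using conn_lift[OF h(1) assms(7) assms(8,9)] .
  moreover have "card T + 1 = card (insert v V')" using h(2) assms(1,2,6) by simp
  ultimately show ?thesis using ST[of "insert v V'" T ends E] assms(1,5,10) by simp
qed

lemma NW_base:
  assumes g: "graph V E ends" and c: "card V = 1" and t: "card E + 2 = 2 * card V"
  shows "bispanning V E ends"
proof -
  have fin: "finite V" "finite E" using g by (auto simp: graph_def)
  have E0: "E = {}" using t c fin by simp
  obtain r where r: "V = {r}" using c card_1_singletonE by blast
  have "connected_graph V {} ends" unfolding connected_graph_def r by (auto intro: reach_refl)
  moreover have "eok V {} ends" by (simp add: eok_def)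
  ultimately have "spanning_tree V E ends {}" using ST[OF fin(1), of "{}" ends E] c by simp
  then show ?thesis using g E0 unfolding bispanning_def by blast
qed

lemma NW_deg2:
  fixes V :: "'v set" and E :: "'e set"
  assumes IH: "\<And>V' E' ends'. card V' < card V \<Longrightarrow> graph V' E' ends' \<Longrightarrow> V' \<noteq> {} \<Longrightarrow>
      card E' + 2 = 2 * card V' \<Longrightarrow> sparse V' E' ends' \<Longrightarrow> bispanning V' E' (ends' :: 'e \<Rightarrow> 'v set)"
    and g: "graph V E ends" and t: "card E + 2 = 2 * card V" and sp: "sparse V E ends"
    and v: "v \<in> V" and I: "{e\<in>E. v \<in> ends e} = {e1, e2}" and ne: "e1 \<noteq> e2"
  shows "bispanning V E ends"
proof -
  have e12: "e1 \<in> E" "v \<in> ends e1" "e2 \<in> E" "v \<in> ends e2" using I by blast+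
  obtain u1 where u1: "ends e1 = {v, u1}" "u1 \<noteq> v" "u1 \<in> V" using inc_end[OF g e12(1,2)] by blast
  obtain u2 where u2: "ends e2 = {v, u2}" "u2 \<noteq> v" "u2 \<in> V" using inc_end[OF g e12(3,4)] by blast
  let ?V' = "V - {v}" and ?E' = "E - {e1, e2}"
  have g': "graph ?V' ?E' ends" using graph_del[OF g] I by simp
  have fin: "finite V" "finite E" using g by (auto simp: graph_def)
  have cV: "card ?V' + 1 = card V"
  proof -
    have "card V > 0" using v fin card_gt_0_iff by blast
    then show ?thesis using v fin by (simp add: card_Diff_singleton)
  qed
  have cE: "card ?E' + 2 = card E"
  proof -
    have "{e1, e2} \<subseteq> E" using e12 by blast
    then have "card ?E' = card E - 2" using card_Diff_subset[of "{e1,e2}" E] ne by simp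
    moreover have "2 \<le> card E" using card_mono[OF fin(2) \<open>{e1, e2} \<subseteq> E\<close>] ne by simp
    ultimately show ?thesis by simp
  qed
  have t': "card ?E' + 2 = 2 * card ?V'" using t cV cE by linarith
  have sp': "sparse ?V' ?E' ends"
    unfolding sparse_def
  proof (intro allI impI)
    fix X assume X: "X \<subseteq> ?V'" "X \<noteq> {}"
    have "ie ?E' ends X \<le> ie E ends X" unfolding ie_def by (rule card_mono) (use fin in auto)
    moreover have "ie E ends X + 2 \<le> 2 * card X" using sp X unfolding sparse_def by blast
    ultimately show "ie ?E' ends X + 2 \<le> 2 * card X" by linarith
  qed
  have ne': "?V' \<noteq> {}" using u1 by blast
  have "bispanning ?V' ?E' ends" using IH[OF _ g' ne' t' sp'] cV by linarith
  then obtain T1 T2 where T: "T1 \<inter> T2 = {}" "T1 \<union> T2 = ?E'" "spanning_tree ?V' ?E' ends T1"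
    "spanning_tree ?V' ?E' ends T2" by (auto simp: bispanning_def)
  have VV: "insert v ?V' = V" using v by blast
  have fV': "finite ?V'" using fin by simp
  have lift: "spanning_tree V E ends (insert e T)"
    if "spanning_tree ?V' ?E' ends T" "e \<in> {e1, e2}" "ends e = {v, u}" "u \<in> ?V'" "T \<subseteq> ?E'" for T e u
  proof -
    have eok1: "eok ?V' T ends" using graph_eok[OF g' that(5)] .
    have eok2: "eok (insert v ?V') (insert e T) ends" unfolding VV using graph_eok[OF g] that(2,5) e12 by blast
    have "finite T" "e \<notin> T" using eok1 that(2,5) by (auto simp: eok_def)
    then have ca: "card (insert e T) = card T + 1" by simp
    have r: "reach ends (insert e T) v u" using that(3) by (intro reach_edge[of e]) auto
    have "spanning_tree (insert v ?V') E ends (insert e T)"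
      by (rule tree_lift[OF fV' _ that(1) eok1 eok2 ca _ that(4) r])
         (use that(2,5) e12 in \<open>auto intro: reach_mono\<close>)
    then show ?thesis unfolding VV .
  qed
  have s1: "spanning_tree V E ends (insert e1 T1)" using lift[OF T(3), of e1 u1] u1 T(2) by blast
  have s2: "spanning_tree V E ends (insert e2 T2)" using lift[OF T(4), of e2 u2] u2 T(2) by blast
  have "insert e1 T1 \<inter> insert e2 T2 = {}" using T(1,2) ne by blast
  moreover have "insert e1 T1 \<union> insert e2 T2 = E" using T(2) e12 by blast
  ultimately show ?thesis using g s1 s2 unfolding bispanning_def by blast
qed

lemma lift3:
  assumes g: "graph V E ends" and v: "v \<in> V"
    and e: "e1 \<in> E" "e2 \<in> E" "e3 \<in> E" "e2 \<noteq> e3" "e1 \<noteq> e2" "e1 \<noteq> e3"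
    and u: "ends e1 = {v, u1}" "ends e2 = {v, u2}" "ends e3 = {v, u3}" "u1 \<in> V - {v}" "u3 \<in> V - {v}"
    and g': "graph (V - {v}) (E - {e2, e3}) (ends(e1 := {u1, u2}))"
    and A: "spanning_tree (V - {v}) (E - {e2, e3}) (ends(e1 := {u1, u2})) A"
    and B: "spanning_tree (V - {v}) (E - {e2, e3}) (ends(e1 := {u1, u2})) B"
    and AB: "A \<inter> B = {}" "A \<union> B = E - {e2, e3}" and e1A: "e1 \<in> A"
  shows "bispanning V E ends"
proof -
  let ?V' = "V - {v}" and ?E' = "E - {e2, e3}" and ?en = "ends(e1 := {u1, u2})"
  have fin: "finite V" "finite E" using g by (auto simp: graph_def)
  have fV': "finite ?V'" using fin by simp
  have VV: "insert v ?V' = V" using v by blast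
  have sA: "A \<subseteq> ?E'" and sB: "B \<subseteq> ?E'" using AB by auto
  have eokA: "eok ?V' A ?en" using graph_eok[OF g' sA] .
  have eokB: "eok ?V' B ?en" using graph_eok[OF g' sB] .
  let ?A1 = "insert e2 A" and ?B1 = "insert e3 B"
  have sA1: "?A1 \<subseteq> E" and sB1: "?B1 \<subseteq> E" using sA sB e by auto
  have eokA1: "eok (insert v ?V') ?A1 ends" unfolding VV using graph_eok[OF g sA1] .
  have eokB1: "eok (insert v ?V') ?B1 ends" unfolding VV using graph_eok[OF g sB1] .
  have "finite A" "e2 \<notin> A" using eokA sA by (auto simp: eok_def)
  then have cA: "card ?A1 = card A + 1" by simp
  have "finite B" "e3 \<notin> B" using eokB sB by (auto simp: eok_def)
  then have cB: "card ?B1 = card B + 1" by simp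
  have rA: "reach ends ?A1 p q" if "reach ?en A p q" for p q
    using that
  proof (rule reach_sim)
    fix f a b assume f: "f \<in> A" "?en f = {a, b}"
    show "reach ends ?A1 a b"
    proof (cases "f = e1")
      case True
      have "reach ends ?A1 v u1" using u(1) e1A by (intro reach_edge[of e1]) auto
      then have "reach ends ?A1 u1 v" by (rule reach_sym)
      moreover have "reach ends ?A1 v u2" using u(2) by (intro reach_edge[of e2]) auto
      ultimately have r12: "reach ends ?A1 u1 u2" by (rule reach_trans)
      then have r21: "reach ends ?A1 u2 u1" by (rule reach_sym)
      have "{a, b} = {u1, u2}" using f(2) True by simp
      then have "(a = u1 \<and> b = u2) \<or> (a = u2 \<and> b = u1)" by (auto simp: doubleton_eq_iff)
      then show ?thesis using r12 r21 by blast
    next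
      case False
      then have "ends f = {a, b}" using f(2) by simp
      then show ?thesis using f(1) by (intro reach_edge[of f]) auto
    qed
  qed
  have rB: "reach ends ?B1 p q" if "reach ?en B p q" for p q
    using that
  proof (rule reach_sim)
    fix f a b assume f: "f \<in> B" "?en f = {a, b}"
    then have "f \<noteq> e1" using AB(1) e1A by blast
    then have "ends f = {a, b}" using f(2) by simp
    then show "reach ends ?B1 a b" using f(1) by (intro reach_edge[of f]) auto
  qed
  have rvA: "reach ends ?A1 v u1" using u(1) e1A by (intro reach_edge[of e1]) auto
  have rvB: "reach ends ?B1 v u3" using u(3) by (intro reach_edge[of e3]) auto
  have s1: "spanning_tree V E ends ?A1"
    using tree_lift[OF fV' _ A eokA eokA1 cA rA u(4) rvA sA1] unfolding VV by blast
  have s2: "spanning_tree V E ends ?B1"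
    using tree_lift[OF fV' _ B eokB eokB1 cB rB u(5) rvB sB1] unfolding VV by blast
  have "?A1 \<inter> ?B1 = {}" using AB(1) sA sB e by blast
  moreover have "?A1 \<union> ?B1 = E" using AB(2) e by blast
  ultimately show ?thesis using g s1 s2 unfolding bispanning_def by blast
qed

lemma end_in: "graph V E ends \<Longrightarrow> e \<in> E \<Longrightarrow> ends e = {v, u} \<Longrightarrow> u \<in> V - {v}"
proof -
  assume g: "graph V E ends" and e: "e \<in> E" and u: "ends e = {v, u}"
  then have "{v, u} \<subseteq> V" "card {v, u} = 2" unfolding graph_def by metis+
  then show ?thesis by (cases "u = v") auto
qed

lemma NW_deg3_adm:
  fixes V :: "'v set" and E :: "'e set"
  assumes IH: "\<And>V' E' ends'. card V' < card V \<Longrightarrow> graph V' E' ends' \<Longrightarrow> V' \<noteq> {} \<Longrightarrow>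
      card E' + 2 = 2 * card V' \<Longrightarrow> sparse V' E' ends' \<Longrightarrow> bispanning V' E' (ends' :: 'e \<Rightarrow> 'v set)"
    and g: "graph V E ends" and t: "card E + 2 = 2 * card V" and sp: "sparse V E ends"
    and v: "v \<in> V" and I: "{e\<in>E. v \<in> ends e} = {e1, e2, e3}"
    and ne: "e1 \<noteq> e2" "e1 \<noteq> e3" "e2 \<noteq> e3"
    and u: "ends e1 = {v, u1}" "ends e2 = {v, u2}" "ends e3 = {v, u3}"
    and uu: "u1 \<noteq> u2"
    and adm: "\<forall>Y\<subseteq>V - {v}. u1 \<in> Y \<longrightarrow> u2 \<in> Y \<longrightarrow> ie E ends Y + 3 \<le> 2 * card Y"
  shows "bispanning V E ends"
proof -
  have e: "e1 \<in> E" "e2 \<in> E" "e3 \<in> E" using I by blast+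
  have fin: "finite V" "finite E" using g by (auto simp: graph_def)
  have uV: "u1 \<in> V - {v}" "u2 \<in> V - {v}" "u3 \<in> V - {v}"
    using end_in[OF g e(1) u(1)] end_in[OF g e(2) u(2)] end_in[OF g e(3) u(3)] by auto
  let ?V' = "V - {v}" and ?E' = "E - {e2, e3}" and ?en = "ends(e1 := {u1, u2})"
  have g': "graph ?V' ?E' ?en"
    unfolding graph_def
  proof (intro conjI)
    show "finite ?V'" "finite ?E'" using fin by auto
    show "\<forall>f\<in>?E'. ?en f \<subseteq> ?V' \<and> card (?en f) = 2"
    proof
    fix f assume f: "f \<in> ?E'"
    show "?en f \<subseteq> ?V' \<and> card (?en f) = 2"
    proof (cases "f = e1")
      case True then show ?thesis using uV uu by simp
    next
      case False
      then have "v \<notin> ends f" using f I by blast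
      moreover have "ends f \<subseteq> V" "card (ends f) = 2" using f g by (auto simp: graph_def)
      ultimately show ?thesis using False by auto
    qed
    qed
  qed
  have cV: "card ?V' + 1 = card V"
  proof -
    have "card V > 0" using v fin card_gt_0_iff by blast
    then show ?thesis using v fin by (simp add: card_Diff_singleton)
  qed
  have cE: "card ?E' + 2 = card E"
  proof -
    have "{e2, e3} \<subseteq> E" using e by blast
    then have "card ?E' = card E - 2" using card_Diff_subset[of "{e2,e3}" E] ne by simp
    moreover have "2 \<le> card E" using card_mono[OF fin(2) \<open>{e2, e3} \<subseteq> E\<close>] ne by simp
    ultimately show ?thesis by simp
  qed
  have t': "card ?E' + 2 = 2 * card ?V'" using t cV cE by linarith
  have sp': "sparse ?V' ?E' ?en"
    unfolding sparse_def
  proof (intro allI impI)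
    fix X assume X: "X \<subseteq> ?V'" "X \<noteq> {}"
    have fS: "finite {e\<in>E. ends e \<subseteq> X}" using fin by simp
    have spX: "ie E ends X + 2 \<le> 2 * card X" using sp X unfolding sparse_def by blast
    show "ie ?E' ?en X + 2 \<le> 2 * card X"
    proof (cases "u1 \<in> X \<and> u2 \<in> X")
      case True
      have "{e\<in>?E'. ?en e \<subseteq> X} \<subseteq> insert e1 {e\<in>E. ends e \<subseteq> X}" by (auto split: if_splits)
      then have "ie ?E' ?en X \<le> card (insert e1 {e\<in>E. ends e \<subseteq> X})"
        unfolding ie_def by (rule card_mono[rotated]) (use fS in simp)
      also have "\<dots> \<le> ie E ends X + 1" unfolding ie_def using fS by (simp add: card_insert_if)
      moreover have "ie E ends X + 3 \<le> 2 * card X" using adm X(1) True by blast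
      ultimately show ?thesis by linarith
    next
      case False
      have "{e\<in>?E'. ?en e \<subseteq> X} \<subseteq> {e\<in>E. ends e \<subseteq> X}" using False by (auto split: if_splits)
      then have "ie ?E' ?en X \<le> ie E ends X" unfolding ie_def by (rule card_mono[rotated]) (use fS in simp)
      then show ?thesis using spX by linarith
    qed
  qed
  have ne': "?V' \<noteq> {}" using uV by blast
  have "bispanning ?V' ?E' ?en" using IH[OF _ g' ne' t' sp'] cV by linarith
  then obtain T1 T2 where T: "T1 \<inter> T2 = {}" "T1 \<union> T2 = ?E'" "spanning_tree ?V' ?E' ?en T1"
    "spanning_tree ?V' ?E' ?en T2" by (auto simp: bispanning_def)
  have "e1 \<in> T1 \<or> e1 \<in> T2" using T(2) e ne by blast
  then show ?thesis
  proof
    assume "e1 \<in> T1"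
    then show ?thesis using lift3[OF g v e ne(3,1,2) u uV(1,3) g' T(3,4,1,2)] by blast
  next
    assume "e1 \<in> T2"
    moreover have "T2 \<inter> T1 = {}" "T2 \<union> T1 = ?E'" using T(1,2) by blast+
    ultimately show ?thesis using lift3[OF g v e ne(3,1,2) u uV(1,3) g' T(4,3)] by blast
  qed
qed

lemma notadm_tight:
  assumes g: "graph V E ends" and sp: "sparse V E ends"
    and uV: "u \<in> V - {v}" "u' \<in> V - {v}"
    and nadm: "\<not> (u \<noteq> u' \<and> (\<forall>Y\<subseteq>V - {v}. u \<in> Y \<longrightarrow> u' \<in> Y \<longrightarrow> ie E ends Y + 3 \<le> 2 * card Y))"
  shows "\<exists>Y\<subseteq>V - {v}. u \<in> Y \<and> u' \<in> Y \<and> ie E ends Y + 2 = 2 * card Y"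
proof (cases "u = u'")
  case True
  have "{e\<in>E. ends e \<subseteq> {u}} = {}"
  proof (rule ccontr)
    assume "{e\<in>E. ends e \<subseteq> {u}} \<noteq> {}"
    then obtain e where e: "e \<in> E" "ends e \<subseteq> {u}" by blast
    then have "card (ends e) = 2" using g by (simp add: graph_def)
    moreover have "card (ends e) \<le> card {u}" using e(2) by (rule card_mono[rotated]) simp
    ultimately show False by simp
  qed
  then have "ie E ends {u} + 2 = 2 * card {u}" unfolding ie_def by (simp only: card.empty) simp
  then show ?thesis using True uV by (intro exI[of _ "{u}"]) auto
next
  case False
  then obtain Y where Y: "Y \<subseteq> V - {v}" "u \<in> Y" "u' \<in> Y" "\<not> ie E ends Y + 3 \<le> 2 * card Y" using nadm by blast
  have "Y \<subseteq> V" "Y \<noteq> {}" using Y by auto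
  then have "ie E ends Y + 2 \<le> 2 * card Y" using sp unfolding sparse_def by blast
  then show ?thesis using Y by (intro exI[of _ Y]) auto
qed

lemma three_tight_false:
  assumes g: "graph V E ends" and sp: "sparse V E ends" and v: "v \<in> V"
    and e: "e1 \<in> E" "e2 \<in> E" "e3 \<in> E" "e1 \<noteq> e2" "e1 \<noteq> e3" "e2 \<noteq> e3"
    and u: "ends e1 = {v, u1}" "ends e2 = {v, u2}" "ends e3 = {v, u3}"
    and Y12: "Y12 \<subseteq> V - {v}" "u1 \<in> Y12" "u2 \<in> Y12" "ie E ends Y12 + 2 = 2 * card Y12"
    and Y13: "Y13 \<subseteq> V - {v}" "u1 \<in> Y13" "u3 \<in> Y13" "ie E ends Y13 + 2 = 2 * card Y13"
    and Y23: "Y23 \<subseteq> V - {v}" "u2 \<in> Y23" "u3 \<in> Y23" "ie E ends Y23 + 2 = 2 * card Y23"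
  shows False
proof -
  have fin: "finite V" "finite E" using g by (auto simp: graph_def)
  have "Y12 \<inter> Y13 \<noteq> {}" using Y12 Y13 by blast
  then have t1: "ie E ends (Y12 \<union> Y13) + 2 = 2 * card (Y12 \<union> Y13)"
    using tight_union[OF sp fin(2,1) _ _ _ Y12(4) Y13(4)] Y12(1) Y13(1) by blast
  have "(Y12 \<union> Y13) \<inter> Y23 \<noteq> {}" using Y12 Y23 by blast
  then have tZ: "ie E ends (Y12 \<union> Y13 \<union> Y23) + 2 = 2 * card (Y12 \<union> Y13 \<union> Y23)"
    using tight_union[OF sp fin(2,1) _ _ _ t1 Y23(4)] Y12(1) Y13(1) Y23(1) by blast
  let ?Z = "Y12 \<union> Y13 \<union> Y23"
  have Z: "?Z \<subseteq> V - {v}" using Y12 Y13 Y23 by blast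
  have fZ: "finite ?Z" using Z fin finite_subset by blast
  have "insert v ?Z \<subseteq> V" "insert v ?Z \<noteq> {}" using Z v by auto
  then have spZ: "ie E ends (insert v ?Z) + 2 \<le> 2 * card (insert v ?Z)" using sp unfolding sparse_def by blast
  have "v \<notin> ?Z" using Z by blast
  then have cZ: "card (insert v ?Z) = card ?Z + 1" using fZ by simp
  let ?S = "{e\<in>E. ends e \<subseteq> ?Z}"
  have fS: "finite ?S" using fin by simp
  have dis: "?S \<inter> {e1, e2, e3} = {}" using u Z by auto
  have sub: "?S \<union> {e1, e2, e3} \<subseteq> {e\<in>E. ends e \<subseteq> insert v ?Z}" using u e Y12 Y13 Y23 by auto
  have "card (?S \<union> {e1, e2, e3}) = card ?S + 3" using card_Un_disjoint[OF fS _ dis] e by simp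
  moreover have "card (?S \<union> {e1, e2, e3}) \<le> ie E ends (insert v ?Z)" unfolding ie_def
    by (rule card_mono[OF _ sub]) (use fin in simp)
  ultimately have "ie E ends ?Z + 3 \<le> ie E ends (insert v ?Z)" unfolding ie_def by simp
  then show False using spZ cZ tZ by linarith
qed

lemma NW_deg3:
  fixes V :: "'v set" and E :: "'e set"
  assumes IH: "\<And>V' E' ends'. card V' < card V \<Longrightarrow> graph V' E' ends' \<Longrightarrow> V' \<noteq> {} \<Longrightarrow>
      card E' + 2 = 2 * card V' \<Longrightarrow> sparse V' E' ends' \<Longrightarrow> bispanning V' E' (ends' :: 'e \<Rightarrow> 'v set)"
    and g: "graph V E ends" and t: "card E + 2 = 2 * card V" and sp: "sparse V E ends"
    and v: "v \<in> V" and I: "{e\<in>E. v \<in> ends e} = {e1, e2, e3}"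
    and ne: "e1 \<noteq> e2" "e1 \<noteq> e3" "e2 \<noteq> e3"
    and u: "ends e1 = {v, u1}" "ends e2 = {v, u2}" "ends e3 = {v, u3}"
  shows "bispanning V E ends"
proof -
  have e: "e1 \<in> E" "e2 \<in> E" "e3 \<in> E" using I by blast+
  have uV: "u1 \<in> V - {v}" "u2 \<in> V - {v}" "u3 \<in> V - {v}"
    using end_in[OF g e(1) u(1)] end_in[OF g e(2) u(2)] end_in[OF g e(3) u(3)] by auto
  define adm where "adm a b \<longleftrightarrow> a \<noteq> b \<and> (\<forall>Y\<subseteq>V - {v}. a \<in> Y \<longrightarrow> b \<in> Y \<longrightarrow> ie E ends Y + 3 \<le> 2 * card Y)" for a b
  consider "adm u1 u2" | "adm u1 u3" | "adm u2 u3" | "\<not> adm u1 u2" "\<not> adm u1 u3" "\<not> adm u2 u3" by blast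
  then show ?thesis
  proof cases
    case 1
    then show ?thesis using NW_deg3_adm[OF IH g t sp v I ne u] unfolding adm_def by blast
  next
    case 2
    have I': "{e\<in>E. v \<in> ends e} = {e1, e3, e2}" using I by blast
    show ?thesis using 2 NW_deg3_adm[OF IH g t sp v I' ne(2,1) ne(3)[symmetric] u(1,3,2)] unfolding adm_def by blast
  next
    case 3
    have I': "{e\<in>E. v \<in> ends e} = {e2, e3, e1}" using I by blast
    show ?thesis using 3 NW_deg3_adm[OF IH g t sp v I' ne(3) ne(1)[symmetric] ne(2)[symmetric] u(2,3,1)] unfolding adm_def by blast
  next
    case 4
    obtain Y12 where Y12: "Y12 \<subseteq> V - {v}" "u1 \<in> Y12" "u2 \<in> Y12" "ie E ends Y12 + 2 = 2 * card Y12"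
      using notadm_tight[OF g sp uV(1,2)] 4(1) unfolding adm_def by blast
    obtain Y13 where Y13: "Y13 \<subseteq> V - {v}" "u1 \<in> Y13" "u3 \<in> Y13" "ie E ends Y13 + 2 = 2 * card Y13"
      using notadm_tight[OF g sp uV(1,3)] 4(2) unfolding adm_def by blast
    obtain Y23 where Y23: "Y23 \<subseteq> V - {v}" "u2 \<in> Y23" "u3 \<in> Y23" "ie E ends Y23 + 2 = 2 * card Y23"
      using notadm_tight[OF g sp uV(2,3)] 4(3) unfolding adm_def by blast
    show ?thesis using three_tight_false[OF g sp v e ne u Y12 Y13 Y23] ..
  qed
qed

theorem NW:
  fixes V :: "'v set" and E :: "'e set" and ends :: "'e \<Rightarrow> 'v set"
  shows "graph V E ends \<Longrightarrow> V \<noteq> {} \<Longrightarrow> card E + 2 = 2 * card V \<Longrightarrow> sparse V E ends \<Longrightarrow> bispanning V E ends"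
proof (induction "card V" arbitrary: V E ends rule: less_induct)
  case less
  note g = less.prems(1) and ne = less.prems(2) and t = less.prems(3) and sp = less.prems(4)
  have IH: "\<And>V' E' ends'. card V' < card V \<Longrightarrow> graph V' E' ends' \<Longrightarrow> V' \<noteq> {} \<Longrightarrow>
      card E' + 2 = 2 * card V' \<Longrightarrow> sparse V' E' ends' \<Longrightarrow> bispanning V' E' (ends' :: 'e \<Rightarrow> 'v set)"
    by (rule less.hyps) auto
  have fin: "finite V" "finite E" using g by (auto simp: graph_def)
  have "card V > 0" using ne fin card_gt_0_iff by blast
  show ?case
  proof (cases "card V = 1")
    case True then show ?thesis using NW_base[OF g _ t] by blast
  next
    case False
    then have c2: "card V \<ge> 2" using \<open>card V > 0\<close> by linarith
    obtain v where v: "v \<in> V" "card {e\<in>E. v \<in> ends e} \<le> 3" using low_deg[OF g t] by blast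
    have ds: "card {e\<in>E. v \<in> ends e} + ie E ends (V - {v}) = card E" using deg_split[OF g v(1)] .
    have cV: "card (V - {v}) + 1 = card V" using v(1) fin \<open>card V > 0\<close> by (simp add: card_Diff_singleton)
    have "V - {v} \<noteq> {}"
    proof
      assume "V - {v} = {}"
      then have "card (V - {v}) = card ({}::'v set)" by (rule arg_cong)
      then have "card (V - {v}) = 0" by (simp only: card.empty)
      then show False using c2 cV by linarith
    qed
    moreover have "V - {v} \<subseteq> V" by blast
    ultimately have "ie E ends (V - {v}) + 2 \<le> 2 * card (V - {v})" using sp unfolding sparse_def by blast
    then have d2: "card {e\<in>E. v \<in> ends e} \<ge> 2" using ds cV t by linarith
    have fI: "finite {e\<in>E. v \<in> ends e}" using fin by simp
    show ?thesis
    proof (cases "card {e\<in>E. v \<in> ends e} = 2")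
      case True
      then obtain e1 e2 where I2: "{e\<in>E. v \<in> ends e} = {e1, e2}" "e1 \<noteq> e2" using True unfolding card_2_iff by blast
      show ?thesis by (rule NW_deg2[OF IH g t sp v(1) I2])
    next
      case False
      then have "card {e\<in>E. v \<in> ends e} = 3" using d2 v(2) by linarith
      then obtain e1 e2 e3 where I: "{e\<in>E. v \<in> ends e} = {e1, e2, e3}" "e1 \<noteq> e2" "e2 \<noteq> e3" "e1 \<noteq> e3"
        unfolding card_3_iff by blast
      have e: "e1 \<in> E" "v \<in> ends e1" "e2 \<in> E" "v \<in> ends e2" "e3 \<in> E" "v \<in> ends e3" using I(1) by blast+
      obtain u1 where u1: "ends e1 = {v, u1}" using inc_end[OF g e(1,2)] by blast
      obtain u2 where u2: "ends e2 = {v, u2}" using inc_end[OF g e(3,4)] by blast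
      obtain u3 where u3: "ends e3 = {v, u3}" using inc_end[OF g e(5,6)] by blast
      show ?thesis using NW_deg3[OF IH g t sp v(1) I(1) I(2) I(4) I(3) u1 u2 u3] .
    qed
  qed
qed

theorem mainTheorem12:
  fixes V :: "'v set" and E :: "'e set" and ends :: "'e \<Rightarrow> 'v set"
    and v x y z :: 'v and ex ey ez :: 'e and a b :: 'v
  assumes "atomic V E ends"
    and "v \<in> V"
    and "ex \<in> E" "ey \<in> E" "ez \<in> E"
    and "ex \<noteq> ey" "ex \<noteq> ez" "ey \<noteq> ez"
    and "{e \<in> E. v \<in> ends e} = {ex, ey, ez}"
    and "ends ex = {v, x}" "ends ey = {v, y}" "ends ez = {v, z}"
    and "(a, b) \<in> {(x, y), (x, z), (y, z)}"
  shows "bispanning (V - {v}) (red_edges E ex ey ez) (red_ends ends a b)"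
proof -
  note at = assms(1) and v = assms(2) and e = assms(3,4,5) and ne = assms(6,7,8)
    and I = assms(9) and u = assms(10,11,12) and ab = assms(13)
  have bs: "bispanning V E ends" using at by (simp add: atomic_def)
  have g: "graph V E ends" using bs by (simp add: bispanning_def)
  have fin: "finite V" "finite E" using g by (auto simp: graph_def)
  have t: "card E + 2 = 2 * card V" using bisp_tight[OF bs] .
  have sp: "sparse V E ends" using bisp_sparse[OF bs] .
  have strict: "ie E ends X + 3 \<le> 2 * card X" if X: "X \<subseteq> V" "2 \<le> card X" "X \<noteq> V" for X
  proof (rule ccontr)
    assume nle: "\<not> ie E ends X + 3 \<le> 2 * card X"
    have neX: "X \<noteq> {}" using X(2) by auto
    have "ie E ends X + 2 \<le> 2 * card X" using sp X(1) neX unfolding sparse_def by blast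
    then have eq: "ie E ends X + 2 = 2 * card X" using nle by linarith
    let ?EX = "{e\<in>E. ends e \<subseteq> X}"
    have fX: "finite X" using X(1) fin finite_subset by blast
    have gX: "graph X ?EX ends" using g fX fin unfolding graph_def by auto
    have tX: "card ?EX + 2 = 2 * card X" using eq by (simp add: ie_def)
    have spX: "sparse X ?EX ends"
      unfolding sparse_def
    proof (intro allI impI)
      fix Y assume Y: "Y \<subseteq> X" "Y \<noteq> {}"
      have "{e\<in>?EX. ends e \<subseteq> Y} = {e\<in>E. ends e \<subseteq> Y}" using Y(1) by blast
      then have "ie ?EX ends Y = ie E ends Y" by (simp add: ie_def)
      moreover have "Y \<subseteq> V" using Y X by blast
      ultimately show "ie ?EX ends Y + 2 \<le> 2 * card Y" using sp Y(2) unfolding sparse_def by simp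
    qed
    have "bispanning X ?EX ends" by (rule NW[OF gX neX tX spX])
    moreover have "subgraph X ?EX V E ends" unfolding subgraph_def using X by auto
    ultimately have "(X = V \<and> ?EX = E) \<or> (\<exists>u. X = {u})" using at unfolding atomic_def by blast
    then show False using X by auto
  qed
  have uV: "x \<in> V - {v}" "y \<in> V - {v}" "z \<in> V - {v}"
    using end_in[OF g e(1) u(1)] end_in[OF g e(2) u(2)] end_in[OF g e(3) u(3)] by auto
  have cE3: "3 \<le> card E"
  proof -
    have "{ex, ey, ez} \<subseteq> E" using e by blast
    then show ?thesis using card_mono[OF fin(2), of "{ex, ey, ez}"] ne by simp
  qed
  have neq: "p \<noteq> q" if h: "f \<in> E" "f' \<in> E" "f \<noteq> f'" "ends f = {v, p}" "ends f' = {v, q}" "p \<in> V - {v}" for f f' p q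
  proof
    assume pq: "p = q"
    let ?X = "{v, p}"
    have X: "?X \<subseteq> V" "card ?X = 2" using h(6) v by auto
    have "{f, f'} \<subseteq> {e\<in>E. ends e \<subseteq> ?X}" using h pq by auto
    then have "2 \<le> ie E ends ?X" unfolding ie_def using card_mono[of "{e\<in>E. ends e \<subseteq> ?X}" "{f, f'}"] fin h(3) by simp
    show False
    proof (cases "?X = V")
      case True
      then have "card E = 2" using t X(2) by simp
      then show False using cE3 by simp
    next
      case False
      then show False using strict[OF X(1) _ False] X(2) \<open>2 \<le> ie E ends ?X\<close> by simp
    qed
  qed
  have xy: "x \<noteq> y" using neq[OF e(1,2) ne(1) u(1,2) uV(1)] .
  have xz: "x \<noteq> z" using neq[OF e(1,3) ne(2) u(1,3) uV(1)] .
  have yz: "y \<noteq> z" using neq[OF e(2,3) ne(3) u(2,3) uV(2)] .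
  have abV: "a \<in> V - {v}" "b \<in> V - {v}" "a \<noteq> b" using ab uV xy xz yz by auto
  let ?V' = "V - {v}" and ?R = "red_edges E ex ey ez" and ?en = "red_ends ends a b"
  let ?D = "E - {ex, ey, ez}"
  have fD: "finite ?D" using fin by simp
  have gR: "graph ?V' ?R ?en"
    unfolding graph_def
  proof (intro conjI)
    show "finite ?V'" using fin by simp
    show "finite ?R" using fD by (simp add: red_edges_def)
    show "\<forall>o'\<in>?R. ?en o' \<subseteq> ?V' \<and> card (?en o') = 2"
    proof
      fix o' assume o': "o' \<in> ?R"
      show "?en o' \<subseteq> ?V' \<and> card (?en o') = 2"
      proof (cases o')
        case None then show ?thesis using abV by (simp add: red_ends_def)
      next
        case (Some f)
        then have f: "f \<in> ?D" using o' by (auto simp: red_edges_def)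
        then have "v \<notin> ends f" using I by blast
        moreover have "ends f \<subseteq> V" "card (ends f) = 2" using f g by (auto simp: graph_def)
        ultimately show ?thesis using Some by (auto simp: red_ends_def)
      qed
    qed
  qed
  have cD: "card ?D + 3 = card E"
  proof -
    have s: "{ex, ey, ez} \<subseteq> E" using e by blast
    have "card {ex, ey, ez} = 3" using ne by simp
    then show ?thesis using card_Diff_subset[OF _ s] cE3 by simp
  qed
  have cR: "card ?R = card ?D + 1"
  proof -
    have "None \<notin> Some ` ?D" by blast
    moreover have "card (Some ` ?D) = card ?D" by (rule card_image) simp
    ultimately show ?thesis using fD by (simp add: red_edges_def)
  qed
  have cV: "card ?V' + 1 = card V"
  proof -
    have "card V > 0" using v fin card_gt_0_iff by blast
    then show ?thesis using v fin by (simp add: card_Diff_singleton)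
  qed
  have tR: "card ?R + 2 = 2 * card ?V'" using cR cD cV t by linarith
  have neV: "?V' \<noteq> {}" using uV by blast
  have spR: "sparse ?V' ?R ?en"
    unfolding sparse_def
  proof (intro allI impI)
    fix Y assume Y: "Y \<subseteq> ?V'" "Y \<noteq> {}"
    have fY: "finite Y" using Y(1) fin finite_subset by blast
    have fR: "finite ?R" using gR by (simp add: graph_def)
    let ?S = "{o'\<in>?R. ?en o' \<subseteq> Y}"
    show "ie ?R ?en Y + 2 \<le> 2 * card Y"
    proof (cases "Y = ?V'")
      case True
      have "ie ?R ?en Y \<le> card ?R" unfolding ie_def by (rule card_mono[OF fR]) blast
      moreover have "card Y = card ?V'" using True by simp
      ultimately show ?thesis using tR by linarith
    next
      case False
      show ?thesis
      proof (cases "card Y = 1")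
        case True
        have "?S = {}"
        proof (rule ccontr)
          assume "?S \<noteq> {}"
          then obtain o' where o': "o' \<in> ?R" "?en o' \<subseteq> Y" by blast
          then have "card (?en o') = 2" using gR by (simp add: graph_def)
          moreover have "card (?en o') \<le> card Y" using card_mono[OF fY o'(2)] .
          ultimately show False using True by simp
        qed
        then have "ie ?R ?en Y = 0" unfolding ie_def by (simp only: card.empty)
        then show ?thesis using True by simp
      next
        case False
        have "card Y \<noteq> 0" using fY Y(2) by simp
        then have c2: "2 \<le> card Y" using False by linarith
        have "Y \<noteq> V" using Y(1) v by blast
        then have st: "ie E ends Y + 3 \<le> 2 * card Y" using strict[OF _ c2] Y(1) by blast
        have "?S \<subseteq> insert None (Some ` {e\<in>E. ends e \<subseteq> Y})"
          by (auto simp: red_edges_def red_ends_def)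
        then have "card ?S \<le> card (insert None (Some ` {e\<in>E. ends e \<subseteq> Y}))"
          by (rule card_mono[rotated]) (use fin in simp)
        also have "\<dots> \<le> card (Some ` {e\<in>E. ends e \<subseteq> Y}) + 1" using card_insert_le[of "Some ` {e\<in>E. ends e \<subseteq> Y}" None] fin by simp
        also have "\<dots> = ie E ends Y + 1" unfolding ie_def by (subst card_image) auto
        finally show ?thesis using st unfolding ie_def by linarith
      qed
    qed
  qed
  show ?thesis by (rule NW[OF gR neV tR spR])
qed

end
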